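(* Let $p\ge 1$, let $\alpha\in[0,1]$ and let $g\in\mathbb{R}^p$ with $g\neq 0$. Let $m$ be an index with $|g_m|=\max_d|g_d|$, and let $I_{12}$ be the $p\times p$ diagonal matrix with $(I_{12})_{dd}=1$ if $|g_d|\ge \alpha|g_m|$ and $(I_{12})_{dd}=0$ otherwise. Let $p_1:=\sum_{d=1}^p (I_{12})_{dd}$ (so $1\le p_1\le p$), let $$\Delta x_{12}:=-I_{12}g\left(\frac{\alpha}{\|I_{12}g\|_1}+\frac{1-\alpha}{\|I_{12}g\|_2}\right),$$ and let $h_\alpha(v):=\alpha\|v\|_1+(1-\alpha)\|v\|_2^2$. Then $$0.61<1-\alpha(1-\alpha)(2-\alpha)\left(1-\frac 1{p_1}\right)\le h_\alpha(\Delta x_{12})\le 1+\alpha(1-\alpha)(\sqrt{p_1}-1)\le 1+\frac{\sqrt{p_1}-1}{4}.$$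
   Context: $\Delta x_{12}$ is the (non-scaled) elastic gradient descent update direction; $p_1$ is the number of coordinates updated. *)

theory Defs
  imports "HOL-Analysis.Analysis"
begin

definition l1norm :: "real^'n \<Rightarrow> real" where
  "l1norm v = (\<Sum>i\<in>UNIV. \<bar>v $ i\<bar>)"

definition h_alpha :: "real \<Rightarrow> real^'n \<Rightarrow> real" where
  "h_alpha \<alpha> v = \<alpha> * l1norm v + (1 - \<alpha>) * (norm v)^2"

definition I12 :: "real \<Rightarrow> real^'n \<Rightarrow> 'n \<Rightarrow> real^'n^'n" where
  "I12 \<alpha> g m = (\<chi> i j. if i = j \<and> \<bar>g $ i\<bar> \<ge> \<alpha> * \<bar>g $ m\<bar> then 1 else 0)"

end

theory Submission
  imports Defs
begin
lemma poly_bd: fixes x::real assumes "0 \<le> x" "x \<le> 1" shows "x*(1-x)*(2-x) < 0.39"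
proof (cases "x \<le> 0.9")
  case True
  define q where "q = (x-0.42)^2*(2.16-x)"
  have "x*(1-x)*(2-x) = 39/100 - (q + 8976/1000000 - 92/10000*x)" unfolding q_def
    by (simp add: power2_eq_square algebra_simps add_divide_distrib diff_divide_distrib)
  moreover have "q \<ge> 0" unfolding q_def using assms by simp
  moreover have "(0.39::real) = 39/100" by simp
  ultimately show ?thesis using True by linarith
next
  case False
  have "x*(1-x) \<le> 1*(1-x)" using assms by (intro mult_right_mono) auto
  then have "x*(1-x) \<le> 0.1" using False by (simp add: algebra_simps)
  moreover have "x*(1-x) \<ge> 0" using assms by simp
  ultimately have "x*(1-x)*(2-x) \<le> 0.1 * (2-x)" using assms by (intro mult_right_mono) auto
  moreover have "0.1 * (2-x) < (0.39::real)" using False by simp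
  ultimately show ?thesis by (rule le_less_trans)
qed

lemma core:
  fixes \<alpha> a b p :: real
  assumes a0: "0 \<le> \<alpha>" and a1: "\<alpha> \<le> 1" and b0: "0 < b" and ba: "b \<le> a" and ap: "a \<le> sqrt p * b" and p1: "1 \<le> p"
  defines "c \<equiv> \<alpha>/a + (1-\<alpha>)/b"
  shows "1 - \<alpha> * (1 - \<alpha>) * (2 - \<alpha>) * (1 - 1 / p) \<le> \<alpha>*(c*a) + (1-\<alpha>)*(c*b)^2"
    and "\<alpha>*(c*a) + (1-\<alpha>)*(c*b)^2 \<le> 1 + \<alpha> * (1 - \<alpha>) * (sqrt p - 1)"
proof -
  define r where "r = a/b"
  define t where "t = b/a"
  have a0': "0 < a" using b0 ba by linarith
  have ca: "c*a = \<alpha> + (1-\<alpha>)*r" unfolding c_def r_def using a0' b0 by (simp add: field_simps)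
  have cb: "c*b = \<alpha>*t + (1-\<alpha>)" unfolding c_def t_def using a0' b0 by (simp add: field_simps)
  have rt: "r*t = 1" unfolding r_def t_def using a0' b0 by simp
  have r1: "1 \<le> r" unfolding r_def using ba b0 by simp
  have rp: "r \<le> sqrt p" unfolding r_def using ap b0 by (simp add: field_simps)
  have t0: "0 < t" "t \<le> 1" unfolding t_def using a0' b0 ba by auto
  have tr: "t = 1/r" using rt r1 by (simp add: field_simps)
  have tp: "1/sqrt p \<le> t" unfolding tr using rp r1 p1 by (intro divide_left_mono) (auto intro!: mult_pos_pos)
  have H: "\<alpha>*(c*a) + (1-\<alpha>)*(c*b)^2 - 1 = \<alpha>*(1-\<alpha>)*((r-1) - (1-t)*(\<alpha>*t+2-\<alpha>))"
    unfolding ca cb by (simp add: algebra_simps power2_eq_square)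
  have aa: "0 \<le> \<alpha>*(1-\<alpha>)" using a0 a1 by simp
  show "\<alpha>*(c*a) + (1-\<alpha>)*(c*b)^2 \<le> 1 + \<alpha> * (1 - \<alpha>) * (sqrt p - 1)"
  proof -
    have "(r-1) - (1-t)*(\<alpha>*t+2-\<alpha>) \<le> sqrt p - 1"
    proof -
      have "(1-t)*(\<alpha>*t+2-\<alpha>) \<ge> 0" using t0 a0 a1 by (intro mult_nonneg_nonneg) (auto, smt (verit) mult_nonneg_nonneg)
      then show ?thesis using rp by linarith
    qed
    then have "\<alpha>*(1-\<alpha>)*((r-1) - (1-t)*(\<alpha>*t+2-\<alpha>)) \<le> \<alpha>*(1-\<alpha>)*(sqrt p - 1)"
      using aa by (rule mult_left_mono)
    then show ?thesis using H by linarith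
  qed
  show "1 - \<alpha> * (1 - \<alpha>) * (2 - \<alpha>) * (1 - 1 / p) \<le> \<alpha>*(c*a) + (1-\<alpha>)*(c*b)^2"
  proof -
    have "(r-1)*(1-t) \<ge> 0" using r1 t0 by simp
    then have rt1: "r - 1 \<ge> 1 - t" using rt by (simp add: algebra_simps)
    have "\<alpha>*t \<le> \<alpha>" using t0 a0 by (intro mult_left_le) auto
    then have e1: "(1-t)*(1-\<alpha>+\<alpha>*t) \<le> (1-t)" using t0
      by (intro mult_left_le) auto
    have s1: "1 \<le> sqrt p" using p1 by simp
    have "sqrt p * 1 \<le> sqrt p * sqrt p" using s1 by (intro mult_left_mono) auto
    then have "sqrt p \<le> p" using p1 by simp
    then have sp: "1/p \<le> 1/sqrt p" using s1 by (intro divide_left_mono) auto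
    have e2: "(1-1/p) \<le> (2-\<alpha>)*(1-1/p)" using a1 p1 by (simp add: mult_le_cancel_right1)
    have "(r-1) - (1-t)*(\<alpha>*t+2-\<alpha>) \<ge> (1-t) - (1-t)*(\<alpha>*t+2-\<alpha>)" using rt1 by linarith
    also have "(1-t) - (1-t)*(\<alpha>*t+2-\<alpha>) = -((1-t)*(1-\<alpha>+\<alpha>*t))" by (simp add: algebra_simps)
    finally have "(r-1) - (1-t)*(\<alpha>*t+2-\<alpha>) \<ge> - ((2-\<alpha>)*(1-1/p))" using e1 e2 sp tp by linarith
    then have "\<alpha>*(1-\<alpha>)*((r-1) - (1-t)*(\<alpha>*t+2-\<alpha>)) \<ge> \<alpha>*(1-\<alpha>)*(- ((2-\<alpha>)*(1-1/p)))"
      using aa by (rule mult_left_mono)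
    moreover have "\<alpha>*(1-\<alpha>)*(- ((2-\<alpha>)*(1-1/p))) = - (\<alpha> * (1 - \<alpha>) * (2 - \<alpha>) * (1 - 1 / p))"
      by (simp add: mult.assoc)
    ultimately show ?thesis using H by linarith
  qed
qed
lemma l1_scale: "l1norm (c *\<^sub>R v) = \<bar>c\<bar> * l1norm v"
  by (simp add: l1norm_def abs_mult sum_distrib_left)
lemma l1_neg: "l1norm (- v) = l1norm v"
  by (simp add: l1norm_def)

theorem theorem2:
  fixes g :: "real^'n" and \<alpha> :: real and m :: 'n
  assumes "0 \<le> \<alpha>" and "\<alpha> \<le> 1" and "g \<noteq> 0"
    and "\<forall>d. \<bar>g $ d\<bar> \<le> \<bar>g $ m\<bar>"
  defines "p1 \<equiv> (\<Sum>d\<in>UNIV. I12 \<alpha> g m $ d $ d)"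
    and "\<Delta>x12 \<equiv> - ((\<alpha> / l1norm (I12 \<alpha> g m *v g) + (1 - \<alpha>) / norm (I12 \<alpha> g m *v g)) *\<^sub>R (I12 \<alpha> g m *v g))"
  shows "0.61 < 1 - \<alpha> * (1 - \<alpha>) * (2 - \<alpha>) * (1 - 1 / p1)
    \<and> 1 - \<alpha> * (1 - \<alpha>) * (2 - \<alpha>) * (1 - 1 / p1) \<le> h_alpha \<alpha> \<Delta>x12
    \<and> h_alpha \<alpha> \<Delta>x12 \<le> 1 + \<alpha> * (1 - \<alpha>) * (sqrt p1 - 1)
    \<and> 1 + \<alpha> * (1 - \<alpha>) * (sqrt p1 - 1) \<le> 1 + (sqrt p1 - 1) / 4"
proof -
  define S where "S = {d. \<alpha> * \<bar>g $ m\<bar> \<le> \<bar>g $ d\<bar>}"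
  define v where "v = I12 \<alpha> g m *v g"
  define f where "f = (\<lambda>d. I12 \<alpha> g m $ d $ d)"
  have fi: "f i = (if i \<in> S then 1 else 0)" for i
    by (simp add: f_def I12_def S_def)
  have vi: "v $ i = f i * g $ i" for i
  proof -
    have "(\<Sum>j\<in>UNIV. (if i = j then 1 else 0) * g $ j) = (\<Sum>j\<in>UNIV. if i = j then g $ j else 0)"
      by (intro sum.cong) auto
    then show ?thesis by (simp add: v_def f_def I12_def matrix_vector_mult_def)
  qed
  have mS: "m \<in> S" unfolding S_def using assms(1,2)
    by (simp add: mult_left_le_one_le)
  have gm: "g $ m \<noteq> 0"
  proof
    assume "g $ m = 0"
    then have "\<forall>d. g $ d = 0" using assms(4) by auto
    then have "g = 0" by (simp add: vec_eq_iff)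
    then show False using assms(3) by simp
  qed
  have vm: "v $ m \<noteq> 0" using vi fi mS gm by simp
  have v0: "v \<noteq> 0" using vm by auto
  define a where "a = l1norm v"
  define b where "b = norm v"
  have b0: "0 < b" using v0 b_def by simp
  have ba: "b \<le> a" unfolding a_def b_def l1norm_def by (rule norm_le_l1_cart)
  have p1f: "p1 = sum f UNIV" unfolding p1_def f_def ..
  have p1c: "p1 = real (card S)" unfolding p1f fi by (simp add: sum.If_cases)
  have p1ge: "1 \<le> p1" unfolding p1c using mS
    using card_gt_0_iff[of S] by (auto simp: Suc_le_eq)
  have ap: "a \<le> sqrt p1 * b"
  proof -
    have "a = (\<Sum>i\<in>UNIV. \<bar>f i\<bar> * \<bar>v $ i\<bar>)" unfolding a_def l1norm_def
      by (intro sum.cong refl) (simp add: vi fi)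
    also have "\<dots> \<le> L2_set f UNIV * L2_set (\<lambda>i. v $ i) UNIV" by (rule L2_set_mult_ineq)
    also have "L2_set f UNIV = sqrt p1" unfolding L2_set_def p1f
      by (intro arg_cong[where f=sqrt] sum.cong refl) (simp add: fi)
    also have "L2_set (\<lambda>i. v $ i) UNIV = b" unfolding b_def norm_vec_def L2_set_def by simp
    finally show ?thesis .
  qed
  define c where "c = \<alpha>/a + (1-\<alpha>)/b"
  have c0: "0 \<le> c" unfolding c_def using assms(1,2) b0 ba by simp
  have hx: "h_alpha \<alpha> \<Delta>x12 = \<alpha>*(c*a) + (1-\<alpha>)*(c*b)^2"
    unfolding h_alpha_def \<Delta>x12_def l1_neg norm_minus_cancel l1_scale
    using c0 by (simp add: c_def a_def b_def v_def)
  note cr = core[OF assms(1,2) b0 ba ap p1ge, folded c_def, folded hx]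
  have aa: "0 \<le> \<alpha>*(1-\<alpha>)" using assms(1,2) by simp
  have q: "\<alpha>*(1-\<alpha>) \<le> 1/4"
  proof -
    have "0 \<le> (\<alpha> - 1/2)^2" by simp
    then show ?thesis by (simp add: power2_eq_square algebra_simps)
  qed
  have sp: "0 \<le> sqrt p1 - 1" using p1ge by simp
  have last: "\<alpha> * (1 - \<alpha>) * (sqrt p1 - 1) \<le> 1/4 * (sqrt p1 - 1)"
    using q sp by (rule mult_right_mono)
  have pp: "0 \<le> 1 - 1/p1" "1 - 1/p1 \<le> 1" using p1ge by auto
  have t3: "0 \<le> \<alpha> * (1 - \<alpha>) * (2 - \<alpha>)" using aa assms(2) by simp
  have "\<alpha> * (1 - \<alpha>) * (2 - \<alpha>) * (1 - 1 / p1) \<le> \<alpha> * (1 - \<alpha>) * (2 - \<alpha>) * 1"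
    using t3 pp by (intro mult_left_mono) auto
  also have "\<dots> < 0.39" using poly_bd[OF assms(1,2)] by simp
  finally have first: "\<alpha> * (1 - \<alpha>) * (2 - \<alpha>) * (1 - 1 / p1) < 0.39" .
  show ?thesis using first cr last by simp
qed
end
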